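(* Let $c>0$, $\epsilon>0$, $T>0$, and let $\{\phi^j_t\}_{j\ge0}$, $t\in[0,T]$, be the solution of the infinite system $$\dot\phi^0_t=(\phi^0_t)^2-\epsilon,\ \phi^0_T=c;\qquad \dot\phi^1_t=2\phi^0_t\phi^1_t+\epsilon,\ \phi^1_T=-c;\qquad \dot\phi^j_t=\sum_{k=0}^{j}\phi^k_t\phi^{j-k}_t,\ \phi^j_T=0\ (j\ge2).$$ Then for every $t\in[0,T]$, $$\phi^0_t=\frac{(-\epsilon-c\sqrt\epsilon)e^{2\sqrt\epsilon(T-t)}+\epsilon-c\sqrt\epsilon}{(-\sqrt\epsilon-c)e^{2\sqrt\epsilon(T-t)}-\sqrt\epsilon+c}>0,$$ the series $\sum_{j\ge0}\phi^j_t$ converges and $\sum_{j=0}^\infty\phi^j_t=0$. Moreover the generating function $S_t(z)=\sum_{k\ge0}z^k\phi^k_t$ satisfies $S_t(1)=0$ and, for $0\le z<1$ (writing $w=\sqrt{\epsilon(1-z)}$), $$S_t(z)=\frac{(-\epsilon(1-z)-c\,w(1-z))e^{2w(T-t)}+\epsilon(1-z)-c\,w(1-z)}{(-w-c(1-z))e^{2w(T-t)}-w+c(1-z)},$$ so the $\phi^k_t$ are the Taylor coefficients of this function in $z$.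
   Context: Note that each equation for $\phi^j$ involves only $\phi^0,\dots,\phi^j$ (the equation for $\phi^j$, $j\ge1$, is linear in $\phi^j$ given the lower-index functions), so the system is solved recursively. *)

theory Defs
  imports "HOL-Analysis.Analysis"
begin

end

theory Submission
  imports Defs "HOL-Analysis.Analysis"
begin


lemma sumK: "0 \<le> (z::real) \<Longrightarrow> z < 1 \<Longrightarrow> summable (\<lambda>k. real (Suc k) * z^k)"
proof -
  assume "0 \<le> z" "z < 1"
  have "summable (\<lambda>n. diffs (\<lambda>_. 1::real) n * z ^ n)"
    by (rule termdiff_converges[where K=1]) (use \<open>0\<le>z\<close> \<open>z<1\<close> in auto)
  then show ?thesis by (simp add: diffs_def)
qed

definition Gf :: "real \<Rightarrow> real \<Rightarrow> real \<Rightarrow> real" where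
  "Gf w cu s = ((- (w^2) - cu*w) * exp(2*w * s) + w^2 - cu*w) / ((- w - cu) * exp(2*w * s) - w + cu)"

lemma Gf_den:
  fixes w cu s :: real
  assumes "w > 0" "cu \<ge> 0" "s \<ge> 0"
  shows "(- w - cu) * exp(2*w * s) - w + cu \<le> - 2*w"
proof -
  have "exp(2*w * s) \<ge> 1" using assms by simp
  then have "(w+cu) * exp(2*w * s) \<ge> (w+cu)" using assms by (simp add: mult_le_cancel_left1)
  then show ?thesis by (simp add: algebra_simps)
qed

lemma Gf_bounds:
  fixes w cu s :: real
  assumes "w > 0" "cu \<ge> 0" "s \<ge> 0"
  shows "0 \<le> Gf w cu s" "Gf w cu s \<le> cu + w" "cu > 0 \<Longrightarrow> 0 < Gf w cu s"
proof -
  define E where "E = exp(2*w * s)"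
  have E1: "E \<ge> 1" using assms by (simp add: E_def)
  have den: "(w+cu)*E + w - cu \<ge> 2*w"
    using Gf_den[OF assms] by (simp add: E_def algebra_simps)
  have G: "Gf w cu s = ((w^2 + cu*w)*E - w^2 + cu*w) / ((w+cu)*E + w - cu)"
    unfolding Gf_def E_def[symmetric]
    by (metis (no_types, opaque_lifting) minus_divide_divide minus_diff_eq minus_mult_left add.commute diff_minus_eq_add minus_add_distrib uminus_add_conv_diff)
  have pE: "(w^2 + cu*w)*E \<ge> (w^2 + cu*w)*1" using E1 assms
    by (intro mult_left_mono) auto
  have n0: "(w^2 + cu*w)*E - w^2 + cu*w \<ge> 2*cu*w" using pE by simp
  have cw: "cu*w \<ge> 0" using assms by simp
  have nn: "0 \<le> (w^2 + cu*w)*E - w^2 + cu*w" using n0 cw by linarith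
  have dp: "0 < (w+cu)*E + w - cu" using den assms by linarith
  show "0 \<le> Gf w cu s" unfolding G using nn dp by simp
  show "cu > 0 \<Longrightarrow> 0 < Gf w cu s" proof -
    assume "cu > 0"
    then have "cu*w > 0" using assms by simp
    then have "0 < (w^2 + cu*w)*E - w^2 + cu*w" using n0 by linarith
    then show ?thesis unfolding G using dp by simp
  qed
  have q: "cu*(w+cu)*E \<ge> cu*(w+cu)*1" using E1 assms by (intro mult_left_mono) auto
  have "(w^2 + cu*w)*E - w^2 + cu*w \<le> (cu + w) * ((w+cu)*E + w - cu)"
  proof -
    have ww: "0 \<le> w^2" by simp
    have e: "(cu+w)*((w+cu)*E+w-cu) - ((w^2+cu*w)*E - w^2 + cu*w) = cu*(w+cu)*E - cu*(w+cu)*1 + 2*w^2"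
      by (simp add: algebra_simps power2_eq_square)
    show ?thesis using q ww e by linarith
  qed
  then show "Gf w cu s \<le> cu + w" unfolding G using den assms
    by (simp add: divide_le_eq)
qed

lemma Gf_0: "w > 0 \<Longrightarrow> Gf w cu 0 = cu"
  unfolding Gf_def by (simp add: field_simps power2_eq_square)

lemma Gf_deriv:
  fixes w cu t T :: real
  assumes "w > 0" "cu \<ge> 0" "t \<le> T"
  shows "((\<lambda>t. Gf w cu (T - t)) has_real_derivative (Gf w cu (T - t))^2 - w^2) (at t within S)"
proof -
  define E where "E = exp(2*w*(T-t))"
  have den: "(- w - cu) * E - w + cu \<noteq> 0"
    using Gf_den[OF assms(1,2), of "T-t"] assms by (simp add: E_def)
  have "((\<lambda>t. Gf w cu (T - t)) has_real_derivative
      ((((- (w^2) - cu*w) * (E * (-2*w))) * ((- w - cu) * E - w + cu)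
        - ((- (w^2) - cu*w) * E + w^2 - cu*w) * ((- w - cu) * (E * (-2*w))))
        / ((- w - cu) * E - w + cu)^2)) (at t within S)"
    unfolding Gf_def
    apply (rule derivative_eq_intros refl)+
    using den by (simp_all add: E_def power2_eq_square)
  moreover have "((((- (w^2) - cu*w) * (E * (-2*w))) * ((- w - cu) * E - w + cu)
        - ((- (w^2) - cu*w) * E + w^2 - cu*w) * ((- w - cu) * (E * (-2*w))))
        / ((- w - cu) * E - w + cu)^2) = (Gf w cu (T - t))^2 - w^2"
  proof -
    define Dd where "Dd = (- w - cu) * E - w + cu"
    define Nn where "Nn = (- (w^2) - cu*w) * E + w^2 - cu*w"
    have Dd0: "Dd \<noteq> 0" using den Dd_def by simp
    have r: "(Gf w cu (T - t))^2 - w^2 = (Nn^2 - w^2*Dd^2)/Dd^2"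
      unfolding Gf_def E_def[symmetric] Nn_def[symmetric] Dd_def[symmetric]
      using Dd0 by (simp add: power_divide diff_divide_distrib)
    have "(((- (w^2) - cu*w) * (E * (-2*w))) * ((- w - cu) * E - w + cu)
        - ((- (w^2) - cu*w) * E + w^2 - cu*w) * ((- w - cu) * (E * (-2*w)))) = Nn^2 - w^2*Dd^2"
      unfolding Nn_def Dd_def by algebra
    then show ?thesis unfolding r Dd_def by simp
  qed
  ultimately show ?thesis by simp
qed


lemma cont_bound:
  fixes a :: "real \<Rightarrow> real"
  assumes "continuous_on {0..T} a"
  obtains A where "A > 0" "\<And>t. t \<in> {0..T} \<Longrightarrow> \<bar>a t\<bar> \<le> A"
proof -
  have "compact (a ` {0..T})" using assms by (intro compact_continuous_image) auto
  then have "bounded (a ` {0..T})" by (rule compact_imp_bounded)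
  then obtain A where "A > 0" "\<forall>x\<in>a ` {0..T}. norm x \<le> A" unfolding bounded_pos by blast
  then show ?thesis using that by auto
qed

lemma deriv_cont_on:
  fixes D D' :: "real \<Rightarrow> real"
  assumes "\<And>t. t \<in> {0..T} \<Longrightarrow> (D has_real_derivative D' t) (at t within {0..T})"
  shows "continuous_on {0..T} D"
  using assms DERIV_continuous continuous_on_eq_continuous_within by blast

lemma cmp:
  fixes D D' a :: "real \<Rightarrow> real" and T :: real
  assumes der: "\<And>t. t \<in> {0..T} \<Longrightarrow> (D has_real_derivative D' t) (at t within {0..T})"
    and DT: "D T \<ge> 0" and ca: "continuous_on {0..T} a"
    and ineq: "\<And>t. t \<in> {0..T} \<Longrightarrow> D t < 0 \<Longrightarrow> D' t \<le> a t * D t"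
    and t0: "t0 \<in> {0..T}"
  shows "D t0 \<ge> 0"
proof (rule ccontr)
  assume neg: "\<not> D t0 \<ge> 0"
  obtain A where A: "A > 0" "\<And>t. t \<in> {0..T} \<Longrightarrow> \<bar>a t\<bar> \<le> A" using cont_bound[OF ca] by blast
  have cD: "continuous_on {0..T} D" by (rule deriv_cont_on[OF der])
  have tT: "t0 < T" using t0 neg DT by (cases "t0 = T") auto
  define Z where "Z = {s \<in> {t0..T}. D s \<ge> 0}"
  have TZ: "T \<in> Z" using tT DT Z_def by auto
  have cl: "closed Z"
  proof -
    have "continuous_on {t0..T} D" using t0 by (intro continuous_on_subset[OF cD]) auto
    then have "closed ({t0..T} \<inter> D -` {0..})"
      by (intro continuous_closed_preimage) auto
    moreover have "{t0..T} \<inter> D -` {0..} = Z" unfolding Z_def by auto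
    ultimately show ?thesis by simp
  qed
  define t1 where "t1 = Inf Z"
  have bdd: "bdd_below Z" unfolding Z_def by (rule bdd_belowI[of _ t0]) auto
  have t1Z: "t1 \<in> Z" unfolding t1_def using cl TZ bdd closed_contains_Inf by blast
  have t1ge: "t1 \<ge> t0" using t1Z Z_def by auto
  have t1ne: "t1 \<noteq> t0" using t1Z Z_def neg by auto
  have lt: "t0 < t1" using t1ge t1ne by simp
  have t1T: "t1 \<le> T" using t1Z Z_def by auto
  have negs: "D s < 0" if "t0 \<le> s" "s < t1" for s
  proof (rule ccontr)
    assume "\<not> D s < 0"
    then have "s \<in> Z" using that t1T Z_def by auto
    then have "t1 \<le> s" unfolding t1_def using bdd by (rule cInf_lower)
    then show False using that by simp
  qed
  define h where "h s = D s * exp (A * s)" for s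
  have hder: "(h has_real_derivative (D' s * exp (A * s) + D s * (exp (A * s) * A))) (at s within {0..T})"
    if "s \<in> {0..T}" for s
    unfolding h_def using der[OF that] by (auto intro!: derivative_eq_intros)
  have ch: "continuous_on {t0..t1} h"
  proof -
    have "continuous_on {0..T} h" unfolding h_def
      by (intro continuous_intros cD)
    then show ?thesis by (rule continuous_on_subset) (use t0 t1T in auto)
  qed
  obtain \<xi> where xi: "t0 < \<xi>" "\<xi> < t1"
     "h t1 - h t0 = (\<lambda>x. (D' \<xi> * exp (A*\<xi>) + D \<xi> * (exp (A*\<xi>) * A)) * x) (t1 - t0)"
  proof (rule mvt[OF lt ch])
    fix x assume x: "t0 < x" "x < t1"
    then have xin: "x \<in> {0..T}" using t0 t1T by auto
    have "at x within {0..T} = at x" using x t0 t1T by (intro at_within_Icc_at) auto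
    then show "(h has_derivative (\<lambda>y. (D' x * exp (A*x) + D x * (exp (A*x) * A)) * y)) (at x)"
      using hder[OF xin] unfolding has_field_derivative_def by simp
  qed auto
  have xin: "\<xi> \<in> {0..T}" using xi t0 t1T by auto
  have Dn: "D \<xi> < 0" using negs xi by auto
  have "a \<xi> * D \<xi> \<le> \<bar>a \<xi>\<bar> * \<bar>D \<xi>\<bar>" by (metis abs_ge_self abs_mult)
  also have "\<dots> \<le> A * \<bar>D \<xi>\<bar>" using A(2)[OF xin] by (intro mult_right_mono) auto
  finally have "D' \<xi> \<le> - A * D \<xi>" using ineq[OF xin Dn] Dn by simp
  then have "D' \<xi> + D \<xi> * A \<le> 0" by (simp add: algebra_simps)
  then have "(D' \<xi> + D \<xi> * A) * exp (A*\<xi>) \<le> 0" by (simp add: mult_nonpos_nonneg)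
  moreover have "D' \<xi> * exp (A*\<xi>) + D \<xi> * (exp (A*\<xi>) * A) = (D' \<xi> + D \<xi> * A) * exp (A*\<xi>)"
    by (simp add: algebra_simps)
  ultimately have "h t1 - h t0 = ((D' \<xi> + D \<xi> * A) * exp (A*\<xi>)) * (t1 - t0)"
    "(D' \<xi> + D \<xi> * A) * exp (A*\<xi>) \<le> 0" using xi(3) by auto
  then have "h t1 - h t0 \<le> 0" using lt by (simp add: mult_nonpos_nonneg)
  moreover have "h t0 < 0" using neg unfolding h_def by (simp add: mult_neg_pos)
  moreover have "h t1 \<ge> 0" using t1Z Z_def h_def by simp
  ultimately show False by simp
qed

lemma Gf_conv:
  fixes eps c z s :: real
  assumes "0 \<le> eps" "z \<le> 1"
  shows "Gf (sqrt (eps*(1-z))) (c*(1-z)) s =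
   (((- eps * (1 - z) - c * sqrt (eps * (1 - z)) * (1 - z)) * exp (2 * sqrt (eps * (1 - z)) * s)
              + eps * (1 - z) - c * sqrt (eps * (1 - z)) * (1 - z))
           / ((- sqrt (eps * (1 - z)) - c * (1 - z)) * exp (2 * sqrt (eps * (1 - z)) * s)
              - sqrt (eps * (1 - z)) + c * (1 - z)))"
proof -
  define w where "w = sqrt (eps*(1-z))"
  have h1: "eps*(1-z) = w^2" using assms by (simp add: w_def)
  have h2: "-eps*(1-z) = -(w^2)" using h1 by simp
  show ?thesis unfolding Gf_def w_def[symmetric] h2 h1 by (simp add: algebra_simps)
qed

lemma Gf_conv0:
  fixes eps c s :: real
  assumes "0 \<le> eps"
  shows "Gf (sqrt eps) c s = ((- eps - c * sqrt eps) * exp (2 * sqrt eps * s) + eps - c * sqrt eps)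
               / ((- sqrt eps - c) * exp (2 * sqrt eps * s) - sqrt eps + c)"
  unfolding Gf_def using assms by (simp add: algebra_simps)

lemma sum_if01: "(n::nat) \<ge> 2 \<Longrightarrow> (\<Sum>k<n. (if k = 0 then - e else if k = 1 then e else (0::real))) = 0"
proof -
  assume "n \<ge> 2"
  then have n: "n = Suc (Suc (n - 2))" by simp
  have "(\<Sum>k<Suc (Suc m). (if k = 0 then - e else if k = 1 then e else (0::real))) = 0" for m
    by (induction m) auto
  then show ?thesis by (subst n) blast
qed

theorem mainTheorem2:
  fixes c eps T :: real and phi :: "nat \<Rightarrow> real \<Rightarrow> real"
  assumes c_pos: "c > 0" and eps_pos: "eps > 0" and T_pos: "T > 0"
    and ode0: "\<forall>t\<in>{0..T}. (phi 0 has_real_derivative (phi 0 t)^2 - eps) (at t within {0..T})"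
    and fin0: "phi 0 T = c"
    and ode1: "\<forall>t\<in>{0..T}. (phi 1 has_real_derivative 2 * phi 0 t * phi 1 t + eps) (at t within {0..T})"
    and fin1: "phi 1 T = - c"
    and odej: "\<forall>j\<ge>2. \<forall>t\<in>{0..T}.
               (phi j has_real_derivative (\<Sum>k=0..j. phi k t * phi (j - k) t)) (at t within {0..T})"
    and finj: "\<forall>j\<ge>2. phi j T = 0"
  shows "\<forall>t\<in>{0..T}.
     phi 0 t = ((- eps - c * sqrt eps) * exp (2 * sqrt eps * (T - t)) + eps - c * sqrt eps)
               / ((- sqrt eps - c) * exp (2 * sqrt eps * (T - t)) - sqrt eps + c)
   \<and> phi 0 t > 0
   \<and> (\<lambda>j. phi j t) sums 0
   \<and> (\<forall>z::real. 0 \<le> z \<and> z < 1 \<longrightarrow>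
        (\<lambda>k. z ^ k * phi k t) sums
          (((- eps * (1 - z) - c * sqrt (eps * (1 - z)) * (1 - z)) * exp (2 * sqrt (eps * (1 - z)) * (T - t))
              + eps * (1 - z) - c * sqrt (eps * (1 - z)) * (1 - z))
           / ((- sqrt (eps * (1 - z)) - c * (1 - z)) * exp (2 * sqrt (eps * (1 - z)) * (T - t))
              - sqrt (eps * (1 - z)) + c * (1 - z))))"
proof -
  define ex where "ex k = (if k = 0 then - eps else if k = 1 then eps else (0::real))" for k :: nat
  define cv where "cv k t = (\<Sum>i=0..k. phi i t * phi (k - i) t)" for k t
  define dd where "dd k t = cv k t + ex k" for k t
  have der: "(phi k has_real_derivative dd k t) (at t within {0..T})" if "t \<in> {0..T}" for k t
  proof -
    consider "k = 0" | "k = 1" | "k \<ge> 2" by linarith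
    then show ?thesis
    proof cases
      case 1 then show ?thesis using ode0 that by (simp add: dd_def cv_def ex_def power2_eq_square)
    next
      case 2
      have "cv 1 t = 2 * phi 0 t * phi 1 t" by (simp add: cv_def)
      then show ?thesis using ode1 that 2 by (simp add: dd_def ex_def)
    next
      case 3 then show ?thesis using odej that by (simp add: dd_def cv_def ex_def)
    qed
  qed
  have cphi: "continuous_on {0..T} (phi k)" for k by (rule deriv_cont_on[OF der])
  have sgn: "phi j t \<le> 0" if "j \<ge> 1" "t \<in> {0..T}" for j t
    using that
  proof (induction j arbitrary: t rule: less_induct)
    case (less j)
    have "0 \<le> - phi j t"
    proof (rule cmp[where D="\<lambda>t. - phi j t" and D'="\<lambda>t. - dd j t" and a="\<lambda>t. 2 * phi 0 t" and T=T])
      show "((\<lambda>t. - phi j t) has_real_derivative - dd j t) (at t within {0..T})" if "t \<in> {0..T}" for t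
        using der[OF that] by (rule DERIV_minus)
      show "0 \<le> - phi j T" using fin1 finj less.prems c_pos by (cases "j = 1") auto
      show "continuous_on {0..T} (\<lambda>t. 2 * phi 0 t)" by (intro continuous_intros cphi)
      show "t \<in> {0..T}" using less.prems by simp
      show "- dd j s \<le> 2 * phi 0 s * - phi j s" if s: "s \<in> {0..T}" "- phi j s < 0" for s
      proof -
        have "(\<Sum>i\<in>{0,j}. phi i s * phi (j - i) s) \<le> cv j s"
          unfolding cv_def
        proof (rule sum_mono2)
          show "finite {0..j}" by simp
          show "{0, j} \<subseteq> {0..j}" by auto
          fix b assume b: "b \<in> {0..j} - {0, j}"
          then have "phi b s \<le> 0" "phi (j - b) s \<le> 0"
            using less.IH[of b s] less.IH[of "j-b" s] s(1) by auto
          then show "0 \<le> phi b s * phi (j - b) s" by (rule mult_nonpos_nonpos)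
        qed
        moreover have "(\<Sum>i\<in>{0,j}. phi i s * phi (j - i) s) = 2 * phi 0 s * phi j s"
          using less.prems by (simp add: algebra_simps)
        moreover have "ex j \<ge> 0" using less.prems eps_pos by (simp add: ex_def)
        ultimately show ?thesis by (simp add: dd_def)
      qed
    qed
    then show ?case by simp
  qed
  have hfin: "(\<Sum>k<n. z^k * phi k T) = c - c*z" if "n \<ge> 2" for n and z :: real
  proof -
    have fin1': "phi (Suc 0) T = - c" using fin1 by simp
    have h: "(\<Sum>k<Suc (Suc m). z^k * phi k T) = c - c*z" for m
    proof (induction m)
      case 0 then show ?case by (simp add: fin0 fin1')
    next
      case (Suc m) then show ?case using finj by simp
    qed
    have "n = Suc (Suc (n - 2))" using that by simp
    then show ?thesis using h[of "n - 2"] by simp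
  qed
  have Pnonneg: "0 \<le> (\<Sum>k<n. phi k t)" if n: "n \<ge> 2" and t: "t \<in> {0..T}" for n t
  proof (rule cmp[where D="\<lambda>t. \<Sum>k<n. phi k t" and D'="\<lambda>t. \<Sum>k<n. dd k t" and a="\<lambda>t. \<Sum>k<n. phi k t" and T=T])
    show "((\<lambda>t. \<Sum>k<n. phi k t) has_real_derivative (\<Sum>k<n. dd k t)) (at t within {0..T})"
      if "t \<in> {0..T}" for t
      by (rule DERIV_sum) (rule der[OF that])
    show "0 \<le> (\<Sum>k<n. phi k T)" using hfin[OF n, of 1] by simp
    show "continuous_on {0..T} (\<lambda>t. \<Sum>k<n. phi k t)" by (intro continuous_intros cphi)
    show "t \<in> {0..T}" by fact
    show "(\<Sum>k<n. dd k s) \<le> (\<Sum>k<n. phi k s) * (\<Sum>k<n. phi k s)" if s: "s \<in> {0..T}" for s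
    proof -
      have "(\<Sum>k<n. ex k) = 0" unfolding ex_def by (rule sum_if01[OF n])
      then have e1: "(\<Sum>k<n. dd k s) = (\<Sum>k<n. cv k s)" by (simp add: dd_def sum.distrib)
      have e2: "(\<Sum>k<n. cv k s) = (\<Sum>(i,j)\<in>{(i,j). i+j < n}. phi i s * phi j s)"
        unfolding cv_def atLeast0AtMost by (rule sum.triangle_reindex[symmetric])
      have e3: "(\<Sum>(i,j)\<in>{(i,j). i+j < n}. phi i s * phi j s) \<le> (\<Sum>(i,j)\<in>{..<n}\<times>{..<n}. phi i s * phi j s)"
      proof (rule sum_mono2)
        show "finite ({..<n}\<times>{..<n})" by simp
        show "{(i,j). i+j < n} \<subseteq> {..<n}\<times>{..<n}" by auto
        fix b assume b: "b \<in> {..<n}\<times>{..<n} - {(i,j). i+j < n}"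
        obtain i j where ij: "b = (i,j)" by fastforce
        have "i \<ge> 1" "j \<ge> 1" using b ij by auto
        then have "phi i s \<le> 0" "phi j s \<le> 0" using sgn s by auto
        then show "0 \<le> (case b of (i,j) \<Rightarrow> phi i s * phi j s)" using ij by (simp add: mult_nonpos_nonpos)
      qed
      have e4: "(\<Sum>(i,j)\<in>{..<n}\<times>{..<n}. phi i s * phi j s) = (\<Sum>k<n. phi k s) * (\<Sum>k<n. phi k s)"
        by (simp add: sum_product sum.cartesian_product)
      show ?thesis using e1 e2 e3 e4 by simp
    qed
  qed
  obtain K where K: "K > 0" "\<And>t. t \<in> {0..T} \<Longrightarrow> \<bar>phi 0 t\<bar> \<le> K"
    using cont_bound[OF cphi[of 0]] by blast
  have phik_le: "- phi k t \<le> phi 0 t" if k: "k \<ge> 1" and t: "t \<in> {0..T}" for k t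
  proof -
    have p: "0 \<le> (\<Sum>i<Suc k. phi i t)" using Pnonneg[of "Suc k" t] k t by (simp del: sum.lessThan_Suc)
    have "(\<Sum>i\<in>{0,k}. - phi i t) \<le> (\<Sum>i<Suc k. - phi i t)"
    proof (rule sum_mono2)
      show "finite {..<Suc k}" by simp
      show "{0, k} \<subseteq> {..<Suc k}" by auto
      fix b assume "b \<in> {..<Suc k} - {0, k}"
      then show "0 \<le> - phi b t" using sgn[of b t] t by auto
    qed
    then have "(\<Sum>i<Suc k. phi i t) \<le> phi 0 t + phi k t" using k by (simp add: sum_negf)
    then show ?thesis using p by simp
  qed
  have bnd: "\<bar>phi k t\<bar> \<le> K" if t: "t \<in> {0..T}" for k t
  proof (cases "k = 0")
    case True then show ?thesis using K t by simp
  next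
    case False
    then have "phi k t \<le> 0" "- phi k t \<le> phi 0 t" using sgn phik_le t by auto
    then show ?thesis using K(2)[OF t] by simp
  qed
  have zpart: "(\<lambda>k. z^k * phi k t) sums Gf (sqrt (eps*(1-z))) (c*(1-z)) (T - t)"
    if z: "0 \<le> z" "z < 1" and t: "t \<in> {0..T}" for z t
  proof -
    define w where "w = sqrt (eps*(1-z))"
    define cu where "cu = c*(1-z)"
    have w0: "w > 0" using z eps_pos by (simp add: w_def)
    have cu0: "cu > 0" using z c_pos by (simp add: cu_def)
    have ww: "w^2 = eps*(1-z)" using z eps_pos by (simp add: w_def)
    define M where "M k = z^k * (real (Suc k) * K^2 + eps)" for k
    have sM: "summable M"
    proof -
      have "summable (\<lambda>k. K^2 * (real (Suc k) * z^k) + eps * z^k)"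
        by (intro summable_add summable_mult sumK summable_geometric) (use z in auto)
      then show ?thesis unfolding M_def by (simp add: algebra_simps)
    qed
    have dbound: "norm (z^k * dd k s) \<le> M k" if s: "s \<in> {0..T}" for k s
    proof -
      have "\<bar>cv k s\<bar> \<le> (\<Sum>i=0..k. \<bar>phi i s * phi (k - i) s\<bar>)" unfolding cv_def by (rule sum_abs)
      also have "\<dots> \<le> (\<Sum>i=0..k. K * K)"
        using K(1) by (intro sum_mono) (auto simp: abs_mult intro!: mult_mono bnd[OF s])
      also have "\<dots> = real (Suc k) * K^2" by (simp add: power2_eq_square)
      finally have a1: "\<bar>cv k s\<bar> \<le> real (Suc k) * K^2" .
      have a2: "\<bar>ex k\<bar> \<le> eps" using eps_pos by (simp add: ex_def)
      have "\<bar>dd k s\<bar> \<le> real (Suc k) * K^2 + eps" unfolding dd_def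
        using a1 a2 abs_triangle_ineq[of "cv k s" "ex k"] by linarith
      then have "z^k * \<bar>dd k s\<bar> \<le> z^k * (real (Suc k) * K^2 + eps)"
        using z by (intro mult_left_mono) auto
      then show ?thesis using z by (simp add: M_def abs_mult)
    qed
    have sabs: "summable (\<lambda>n. \<bar>z^n * phi n s\<bar>)" if s: "s \<in> {0..T}" for s
    proof (rule summable_comparison_test'[where g="\<lambda>n. K * z^n" and N=0])
      show "summable (\<lambda>n. K * z^n)" by (intro summable_mult summable_geometric) (use z in auto)
      fix n :: nat
      have "\<bar>z^n * phi n s\<bar> = z^n * \<bar>phi n s\<bar>" using z by (simp add: abs_mult)
      also have "\<dots> \<le> z^n * K" using z bnd[OF s] by (intro mult_left_mono) auto
      finally show "norm \<bar>z^n * phi n s\<bar> \<le> K * z^n" by (simp add: mult.commute)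
    qed
    have ul: "uniform_limit {0..T} (\<lambda>n x. \<Sum>i<n. z^i * dd i x) (\<lambda>x. \<Sum>i. z^i * dd i x) sequentially"
      by (rule Weierstrass_m_test[OF dbound sM])
    have fder: "((\<lambda>t. z^n * phi n t) has_field_derivative z^n * dd n x) (at x within {0..T})"
      if "x \<in> {0..T}" for n x
      by (intro DERIV_cmult der that)
    have sT: "summable (\<lambda>n. z^n * phi n T)"
      by (rule summable_rabs_cancel[OF sabs]) (use T_pos in simp)
    obtain g where g: "\<forall>x\<in>{0..T}. (\<lambda>n. z^n * phi n x) sums g x \<and>
        (g has_field_derivative (\<Sum>i. z^i * dd i x)) (at x within {0..T})"
      using has_field_derivative_series[OF _ fder ul _ sT] T_pos by auto
    have gd: "(\<Sum>i. z^i * dd i x) = (g x)^2 - w^2" if x: "x \<in> {0..T}" for x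
    proof -
      define a where "a i = z^i * phi i x" for i
      have as: "a sums g x" using g x by (simp add: a_def[abs_def])
      have an: "summable (\<lambda>i. norm (a i))" using sabs[OF x] by (simp add: a_def)
      have c1: "(\<lambda>k. \<Sum>i\<le>k. a i * a (k - i)) sums (g x * g x)"
        using Cauchy_product_sums[OF an an] sums_unique[OF as, symmetric] by simp
      have c2: "(\<lambda>k. z^k * ex k) sums (- eps + z * eps)"
      proof -
        have "(\<lambda>k. z^k * ex k) sums (\<Sum>k\<in>{0,1}. z^k * ex k)" by (rule sums_finite) (auto simp: ex_def)
        then show ?thesis by (simp add: ex_def)
      qed
      have eq: "(\<lambda>k. z^k * dd k x) = (\<lambda>k. (\<Sum>i\<le>k. a i * a (k - i)) + z^k * ex k)"
      proof
        fix k
        have "z^k * cv k x = (\<Sum>i\<le>k. a i * a (k - i))"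
          unfolding cv_def a_def sum_distrib_left atLeast0AtMost
        proof (rule sum.cong[OF refl])
          fix i assume "i \<in> {..k}"
          then have zk: "z^k = z^i * z^(k-i)" by (simp add: power_add[symmetric])
          show "z^k * (phi i x * phi (k-i) x) = z^i * phi i x * (z^(k-i) * phi (k-i) x)"
            unfolding zk by (simp add: algebra_simps)
        qed
        then show "z^k * dd k x = (\<Sum>i\<le>k. a i * a (k - i)) + z^k * ex k"
          by (simp add: dd_def distrib_left)
      qed
      have "(\<lambda>k. z^k * dd k x) sums (g x * g x + (- eps + z * eps))"
        unfolding eq by (rule sums_add[OF c1 c2])
      then have "(\<Sum>k. z^k * dd k x) = g x * g x + (- eps + z * eps)" by (simp add: sums_iff)
      then show ?thesis using ww by (simp add: power2_eq_square algebra_simps)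
    qed
    define G where "G = (\<lambda>s. Gf w cu (T - s))"
    have Gder: "(G has_real_derivative (G s)^2 - w^2) (at s within {0..T})" if "s \<in> {0..T}" for s
      unfolding G_def using Gf_deriv[OF w0, of cu s T] cu0 that by auto
    have gder: "(g has_real_derivative (g s)^2 - w^2) (at s within {0..T})" if "s \<in> {0..T}" for s
      using g gd that by auto
    have gT: "g T = cu"
    proof -
      have "(\<lambda>n. z^n * phi n T) sums (\<Sum>n\<in>{0,1}. z^n * phi n T)"
        by (rule sums_finite) (auto simp: finj)
      moreover have "phi (Suc 0) T = - c" using fin1 by simp
      ultimately have "(\<lambda>n. z^n * phi n T) sums cu" by (simp add: fin0 cu_def algebra_simps)
      moreover have "(\<lambda>n. z^n * phi n T) sums g T" using g T_pos by auto
      ultimately show ?thesis using sums_unique2 by blast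
    qed
    have GT: "G T = cu" by (simp add: G_def Gf_0 w0)
    have ca: "continuous_on {0..T} (\<lambda>s. g s + G s)"
      by (intro continuous_intros deriv_cont_on[OF gder] deriv_cont_on[OF Gder])
    have d1: "0 \<le> g t - G t"
    proof (rule cmp[where D="\<lambda>s. g s - G s" and D'="\<lambda>s. ((g s)^2 - w^2) - ((G s)^2 - w^2)" and a="\<lambda>s. g s + G s" and T=T])
      show "((\<lambda>s. g s - G s) has_real_derivative ((g s)^2 - w^2) - ((G s)^2 - w^2)) (at s within {0..T})"
        if "s \<in> {0..T}" for s using gder[OF that] Gder[OF that] by (rule DERIV_diff)
      show "0 \<le> g T - G T" using gT GT by simp
      show "continuous_on {0..T} (\<lambda>s. g s + G s)" by (rule ca)
      show "t \<in> {0..T}" by fact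
      show "((g s)^2 - w^2) - ((G s)^2 - w^2) \<le> (g s + G s) * (g s - G s)" for s
        by (simp add: algebra_simps power2_eq_square)
    qed
    have d2: "0 \<le> G t - g t"
    proof (rule cmp[where D="\<lambda>s. G s - g s" and D'="\<lambda>s. ((G s)^2 - w^2) - ((g s)^2 - w^2)" and a="\<lambda>s. g s + G s" and T=T])
      show "((\<lambda>s. G s - g s) has_real_derivative ((G s)^2 - w^2) - ((g s)^2 - w^2)) (at s within {0..T})"
        if "s \<in> {0..T}" for s using Gder[OF that] gder[OF that] by (rule DERIV_diff)
      show "0 \<le> G T - g T" using gT GT by simp
      show "continuous_on {0..T} (\<lambda>s. g s + G s)" by (rule ca)
      show "t \<in> {0..T}" by fact
      show "((G s)^2 - w^2) - ((g s)^2 - w^2) \<le> (g s + G s) * (G s - g s)" for s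
        by (simp add: algebra_simps power2_eq_square)
    qed
    have "g t = G t" using d1 d2 by simp
    moreover have "(\<lambda>k. z^k * phi k t) sums g t" using g t by blast
    ultimately show ?thesis by (simp add: G_def w_def cu_def)
  qed
  show ?thesis
  proof
    fix t assume t: "t \<in> {0..T}"
    have r1: "sqrt (eps*(1-0)) = sqrt eps" "c*(1-0) = c" by simp_all
    have z0: "(\<lambda>k. 0^k * phi k t) sums Gf (sqrt eps) c (T - t)"
      using zpart[of 0 t, unfolded r1] t by simp
    have "(\<lambda>k. 0^k * phi k t) sums phi 0 t"
      using powser_sums_zero[of "\<lambda>k. phi k t"] by (simp add: mult.commute)
    then have phi0: "phi 0 t = Gf (sqrt eps) c (T - t)" using z0 sums_unique2 by blast
    have pos: "phi 0 t > 0" using Gf_bounds(3)[of "sqrt eps" c "T - t"] phi0 eps_pos c_pos t by simp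
    have zs: "\<forall>z::real. 0 \<le> z \<and> z < 1 \<longrightarrow>
        (\<lambda>k. z ^ k * phi k t) sums
          (((- eps * (1 - z) - c * sqrt (eps * (1 - z)) * (1 - z)) * exp (2 * sqrt (eps * (1 - z)) * (T - t))
              + eps * (1 - z) - c * sqrt (eps * (1 - z)) * (1 - z))
           / ((- sqrt (eps * (1 - z)) - c * (1 - z)) * exp (2 * sqrt (eps * (1 - z)) * (T - t))
              - sqrt (eps * (1 - z)) + c * (1 - z)))"
    proof (intro allI impI)
      fix z :: real assume z: "0 \<le> z \<and> z < 1"
      show "(\<lambda>k. z ^ k * phi k t) sums
          (((- eps * (1 - z) - c * sqrt (eps * (1 - z)) * (1 - z)) * exp (2 * sqrt (eps * (1 - z)) * (T - t))
              + eps * (1 - z) - c * sqrt (eps * (1 - z)) * (1 - z))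
           / ((- sqrt (eps * (1 - z)) - c * (1 - z)) * exp (2 * sqrt (eps * (1 - z)) * (T - t))
              - sqrt (eps * (1 - z)) + c * (1 - z)))"
        using zpart[of z t] z t Gf_conv[of eps z c "T - t"] eps_pos by simp
    qed
    have absum: "(\<Sum>k\<le>n. \<bar>phi k t\<bar>) \<le> 2 * phi 0 t" for n
    proof -
      have e: "(\<Sum>k\<le>n. \<bar>phi k t\<bar>) = (\<Sum>k\<le>n. (if k = 0 then 2 * phi 0 t else 0) - phi k t)"
        by (rule sum.cong[OF refl]) (use pos sgn t in auto)
      have "(\<Sum>k\<le>n. phi k t) \<ge> 0"
      proof (cases "n = 0")
        case True then show ?thesis using pos by simp
      next
        case False then show ?thesis using Pnonneg[of "Suc n" t] t by (simp add: lessThan_Suc_atMost)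
      qed
      then show ?thesis unfolding e by (simp add: sum_subtractf)
    qed
    have sabs1: "summable (\<lambda>k. \<bar>phi k t\<bar>)"
      by (rule bounded_imp_summable[of _ "2 * phi 0 t"]) (use absum in auto)
    have sm1: "summable (\<lambda>k. phi k t)" by (rule summable_rabs_cancel[OF sabs1])
    define L where "L = (\<Sum>k. phi k t)"
    have Ls: "(\<lambda>k. phi k t) sums L" using sm1 L_def summable_sums by blast
    have L0: "0 \<le> L" unfolding L_def
    proof (rule LIMSEQ_le_const[OF summable_LIMSEQ[OF sm1]])
      show "\<exists>N. \<forall>n\<ge>N. 0 \<le> (\<Sum>i<n. phi i t)" using Pnonneg t by blast
    qed
    have Lle: "L \<le> c*(1-z) + sqrt(eps*(1-z))" if z: "0 \<le> z" "z < 1" for z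
    proof -
      have a: "(\<lambda>k. phi k t - z^k * phi k t) sums (L - Gf (sqrt (eps*(1-z))) (c*(1-z)) (T - t))"
        using sums_diff[OF Ls zpart[OF z t]] .
      have b: "phi k t - z^k * phi k t \<le> 0" for k
      proof (cases "k = 0")
        case True then show ?thesis by simp
      next
        case False
        have "z^k \<le> 1" using z by (simp add: power_le_one)
        moreover have "phi k t \<le> 0" using sgn False t by simp
        ultimately have "(1 - z^k) * phi k t \<le> 0" by (simp add: mult_nonneg_nonpos)
        then show ?thesis by (simp add: algebra_simps)
      qed
      have "L - Gf (sqrt (eps*(1-z))) (c*(1-z)) (T - t) \<le> 0"
        using sums_le[OF b a sums_zero] .
      moreover have "Gf (sqrt (eps*(1-z))) (c*(1-z)) (T - t) \<le> c*(1-z) + sqrt(eps*(1-z))"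
        using Gf_bounds(2)[of "sqrt (eps*(1-z))" "c*(1-z)" "T - t"] z t eps_pos c_pos by simp
      ultimately show ?thesis by simp
    qed
    have "L \<le> 0"
    proof (rule ccontr)
      assume "\<not> L \<le> 0"
      then have Lp: "L > 0" by simp
      define u where "u = min (1/2) (min (L/(3*c)) (L^2/(9*eps)))"
      have u0: "u > 0" using Lp c_pos eps_pos by (simp add: u_def)
      have u1: "u \<le> 1/2" by (simp add: u_def)
      have u2: "u \<le> L/(3*c)" by (simp add: u_def)
      have u3: "u \<le> L^2/(9*eps)" by (simp add: u_def)
      have "L \<le> c*(1-(1-u)) + sqrt(eps*(1-(1-u)))" using Lle[of "1-u"] u0 u1 by simp
      then have Lu: "L \<le> c*u + sqrt(eps*u)" by simp
      have "c*u \<le> c*(L/(3*c))" using u2 c_pos by (intro mult_left_mono) auto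
      then have cu: "c*u \<le> L/3" using c_pos by simp
      have "eps*u \<le> eps*(L^2/(9*eps))" using u3 eps_pos by (intro mult_left_mono) auto
      then have "eps*u \<le> (L/3)^2" using eps_pos by (simp add: power_divide)
      then have "sqrt(eps*u) \<le> sqrt((L/3)^2)" by (rule real_sqrt_le_mono)
      then have "sqrt(eps*u) \<le> L/3" using Lp by simp
      then show False using Lu cu Lp by linarith
    qed
    then have "L = 0" using L0 by simp
    then have s0: "(\<lambda>j. phi j t) sums 0" using Ls by simp
    show "phi 0 t = ((- eps - c * sqrt eps) * exp (2 * sqrt eps * (T - t)) + eps - c * sqrt eps)
               / ((- sqrt eps - c) * exp (2 * sqrt eps * (T - t)) - sqrt eps + c)
   \<and> phi 0 t > 0
   \<and> (\<lambda>j. phi j t) sums 0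
   \<and> (\<forall>z::real. 0 \<le> z \<and> z < 1 \<longrightarrow>
        (\<lambda>k. z ^ k * phi k t) sums
          (((- eps * (1 - z) - c * sqrt (eps * (1 - z)) * (1 - z)) * exp (2 * sqrt (eps * (1 - z)) * (T - t))
              + eps * (1 - z) - c * sqrt (eps * (1 - z)) * (1 - z))
           / ((- sqrt (eps * (1 - z)) - c * (1 - z)) * exp (2 * sqrt (eps * (1 - z)) * (T - t))
              - sqrt (eps * (1 - z)) + c * (1 - z))))"
      using phi0 Gf_conv0[of eps c "T - t"] eps_pos pos s0 zs by simp
  qed
qed

end
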